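(* Let $k, s$ be constants, $S \subseteq \mathbb{F}$ finite, $m \leq s-1-k$ a natural number, $D = 10|S|(s-m)/m^{1/k}$, and let $P$ assign to every $\mathbf{a}\in S^k$ a tuple $P(\mathbf{a}) = (P_0(\mathbf{a}),\dots,P_{s-1}(\mathbf{a}))$ with $P_i(\mathbf{a}) \in \mathbb{F}[\mathbf{z}]$ homogeneous of degree $i$. Let $Q(\mathbf{x},\mathbf{y}) = \sum_{i=1}^m Q_i(\mathbf{x}) y_i \in \mathbb{F}(\mathbf{z})[\mathbf{x},\mathbf{y}]$ be a non-zero polynomial with each $Q_i$ of $\mathbf{x}$-degree at most $D$, such that $\Delta_{\mathbf{e}}(Q)(\mathbf{a}) = 0$ for every $\mathbf{a}\in S^k$ and every $\mathbf{e}\in\mathbb{Z}_{\geq 0}^k$ with $\|\mathbf{e}\|_1 \leq s-1-m$. If $f \in \mathbb{F}[\mathbf{x}]$ is a polynomial of degree at most $d$ such that the number of $\mathbf{a} \in S^k$ satisfying $P(\mathbf{a}) = \Delta(f)(\mathbf{a})$ is at least $T > (D+d)|S|^{k-1}/(s-m)$, then $Q(\mathbf{x}, \Delta_0(f), \Delta_1(f), \dots, \Delta_{m-1}(f)) = \sum_{i=1}^m Q_i(\mathbf{x})\Delta_{i-1}(f)$ is identically zero as a polynomial in $\mathbb{F}(\mathbf{z})[\mathbf{x}]$.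
   Context: $\mathbb{F}$ is a field of characteristic zero or larger than $d$. $\mathbf{x} = (x_1,\dots,x_k)$, $\mathbf{z}=(z_1,\dots,z_k)$, $\mathbf{y}=(y_1,\dots,y_m)$. Hasse derivatives with respect to $\mathbf{x}$: $\frac{\partial g}{\partial \mathbf{x}^{\mathbf{e}}}$ is the coefficient of $\mathbf{w}^{\mathbf{e}}$ in $g(\mathbf{x}+\mathbf{w})$. For $f\in\mathbb{F}[\mathbf{x}]$, $\Delta_i(f) := \sum_{\mathbf{e} : \|\mathbf{e}\|_1 = i} \mathbf{z}^{\mathbf{e}} \frac{\partial f}{\partial \mathbf{x}^{\mathbf{e}}} \in \mathbb{F}[\mathbf{x},\mathbf{z}]$ and $\Delta(f)(\mathbf{a}) = (\Delta_0(f)(\mathbf{a}),\dots,\Delta_{s-1}(f)(\mathbf{a})) \in \mathbb{F}[\mathbf{z}]^s$. For $\mathbf{e}' \leq \mathbf{e}$ coordinatewise, $\binom{\mathbf{e}}{\mathbf{e}'} = \prod_j\binom{e_j}{e'_j}$. For a tuple $P=(P_0,\dots,P_{s-1})$ of homogeneous $P_i\in\mathbb{F}[\mathbf{z}]$ of degree $i$, $\tau^{(i)}_{\mathbf{e}}(P) := \sum_{\|\mathbf{e}'\|_1 = i} \mathbf{z}^{\mathbf{e}'}\binom{\mathbf{e}+\mathbf{e}'}{\mathbf{e}}\operatorname{coeff}_{\mathbf{z}^{\mathbf{e}+\mathbf{e}'}}(P_{i+\|\mathbf{e}\|_1})$, and $\Delta_{\mathbf{e}}(Q)(\mathbf{a})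 := \sum_{i=1}^m\sum_{\mathbf{e}'\leq\mathbf{e}} \frac{\partial Q_i}{\partial\mathbf{x}^{\mathbf{e}'}}(\mathbf{a})\cdot\tau^{(i-1)}_{\mathbf{e}-\mathbf{e}'}(P(\mathbf{a}))$. *)

theory Defs
  imports "HOL-Library.Poly_Mapping" "HOL-Library.Cardinality" "HOL-Computational_Algebra.Fraction_Field" Complex_Main
begin

text \<open>Multivariate polynomials in the variables indexed by a finite type 'k
  (so there are k = CARD('k) variables): finitely supported maps from exponent
  vectors to coefficients.  The same index type is used for
  x = (x_1,...,x_k) and z = (z_1,...,z_k).\<close>

type_synonym ('k, 'a) mpoly = "('k \<Rightarrow>\<^sub>0 nat) \<Rightarrow>\<^sub>0 'a"

type_synonym ('k, 'a) ratfun = "('k, 'a) mpoly fract"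

definition mdeg :: "('k \<Rightarrow>\<^sub>0 nat) \<Rightarrow> nat" where
  "mdeg e = (\<Sum>j\<in>Poly_Mapping.keys e. Poly_Mapping.lookup e j)"

text \<open>Total degree of a polynomial (0 for the zero polynomial).\<close>
definition tdeg :: "('k, 'a::zero) mpoly \<Rightarrow> nat" where
  "tdeg p = Max (insert 0 (mdeg ` Poly_Mapping.keys p))"

definition expvecs :: "nat \<Rightarrow> ('k \<Rightarrow>\<^sub>0 nat) set" where
  "expvecs i = {e. mdeg e = i}"

definition mbinom :: "('k \<Rightarrow>\<^sub>0 nat) \<Rightarrow> ('k \<Rightarrow>\<^sub>0 nat) \<Rightarrow> nat" where
  "mbinom e e' = (\<Prod>j\<in>Poly_Mapping.keys e'. Poly_Mapping.lookup e j choose Poly_Mapping.lookup e' j)"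

definition mpeval :: "('k, 'b::comm_semiring_1) mpoly \<Rightarrow> ('k \<Rightarrow> 'b) \<Rightarrow> 'b" where
  "mpeval p a = (\<Sum>\<alpha>\<in>Poly_Mapping.keys p. Poly_Mapping.lookup p \<alpha> * (\<Prod>j\<in>Poly_Mapping.keys \<alpha>. a j ^ Poly_Mapping.lookup \<alpha> j))"

text \<open>Hasse derivative d g / d x^e: coefficient of w^e in g(x+w).  Expanding
  (x+w)^\<alpha> by the binomial theorem this is sum_\<alpha> c_\<alpha> binom(\<alpha>,e) x^(\<alpha>-e)
  (terms with e not below \<alpha> have binomial coefficient 0).\<close>
definition hasse :: "('k \<Rightarrow>\<^sub>0 nat) \<Rightarrow> ('k, 'b::comm_semiring_1) mpoly \<Rightarrow> ('k, 'b) mpoly" where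
  "hasse e p = (\<Sum>\<alpha>\<in>Poly_Mapping.keys p. Poly_Mapping.single (\<alpha> - e) (of_nat (mbinom \<alpha> e) * Poly_Mapping.lookup p \<alpha>))"

definition rconst :: "'a::idom \<Rightarrow> ('k::{linorder}, 'a) ratfun" where
  "rconst c = Fraction_Field.Fract (Poly_Mapping.single 0 c) 1"

definition rpoly :: "('k::{linorder}, 'a::idom) mpoly \<Rightarrow> ('k, 'a) ratfun" where
  "rpoly p = Fraction_Field.Fract p 1"

definition DeltaAt :: "('k::finite, 'a::field) mpoly \<Rightarrow> nat \<Rightarrow> ('k \<Rightarrow> 'a) \<Rightarrow> ('k, 'a) mpoly" where
  "DeltaAt f i a = (\<Sum>e\<in>expvecs i. Poly_Mapping.single e (mpeval (hasse e f) a))"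

definition DeltaPoly :: "('k::{finite,linorder}, 'a::field) mpoly \<Rightarrow> nat \<Rightarrow> ('k, ('k, 'a) ratfun) mpoly" where
  "DeltaPoly f i = (\<Sum>e\<in>expvecs i. Poly_Mapping.map (\<lambda>c. rpoly (Poly_Mapping.single e c)) (hasse e f))"

definition tau :: "nat \<Rightarrow> ('k::finite \<Rightarrow>\<^sub>0 nat) \<Rightarrow> (nat \<Rightarrow> ('k, 'a::field) mpoly) \<Rightarrow> ('k, 'a) mpoly" where
  "tau i e Pt = (\<Sum>e'\<in>expvecs i.
      Poly_Mapping.single e' (of_nat (mbinom (e + e') e) * Poly_Mapping.lookup (Pt (i + mdeg e)) (e + e')))"

definition DeltaQ :: "nat \<Rightarrow> (nat \<Rightarrow> ('k::{finite,linorder}, ('k, 'a::field) ratfun) mpoly)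
    \<Rightarrow> (nat \<Rightarrow> ('k, 'a) mpoly) \<Rightarrow> ('k \<Rightarrow>\<^sub>0 nat) \<Rightarrow> ('k \<Rightarrow> 'a) \<Rightarrow> ('k, 'a) ratfun" where
  "DeltaQ m Q Pt e a = (\<Sum>i\<in>{1..m}. \<Sum>e'\<in>{e'. \<forall>j. Poly_Mapping.lookup e' j \<le> Poly_Mapping.lookup e j}.
      mpeval (hasse e' (Q i)) (\<lambda>j. rconst (a j)) * rpoly (tau (i - 1) (e - e') Pt))"

end

theory Submission
  imports Defs "HOL-Library.FuncSet" "HOL-Computational_Algebra.Polynomial"
begin


abbreviation lk where "lk \<equiv> Poly_Mapping.lookup"
abbreviation ks where "ks \<equiv> Poly_Mapping.keys"
abbreviation sg where "sg \<equiv> Poly_Mapping.single"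

definition lin :: "(('k \<Rightarrow>\<^sub>0 nat) \<Rightarrow> 'b::zero \<Rightarrow> 'c::comm_monoid_add) \<Rightarrow> ('k,'b) mpoly \<Rightarrow> 'c" where
  "lin h p = (\<Sum>\<alpha>\<in>ks p. h \<alpha> (lk p \<alpha>))"

lemma lin_superset:
  assumes "finite A" "ks p \<subseteq> A" "\<And>\<alpha>. h \<alpha> 0 = 0"
  shows "lin h p = (\<Sum>\<alpha>\<in>A. h \<alpha> (lk p \<alpha>))"
  unfolding lin_def using assms
  by (intro sum.mono_neutral_left) (auto simp: in_keys_iff)

lemma lin_add:
  assumes "\<And>\<alpha> x y. h \<alpha> (x + y) = h \<alpha> x + h \<alpha> y" "\<And>\<alpha>. h \<alpha> 0 = 0"
  shows "lin h (p + q) = lin h p + lin h q"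
proof -
  let ?A = "ks p \<union> ks q"
  have "lin h (p+q) = (\<Sum>\<alpha>\<in>?A. h \<alpha> (lk (p+q) \<alpha>))"
    using keys_add[of p q] assms by (intro lin_superset) auto
  also have "\<dots> = (\<Sum>\<alpha>\<in>?A. h \<alpha> (lk p \<alpha>)) + (\<Sum>\<alpha>\<in>?A. h \<alpha> (lk q \<alpha>))"
    by (simp add: lookup_add assms(1) sum.distrib)
  also have "\<dots> = lin h p + lin h q"
    using lin_superset[of ?A p h] lin_superset[of ?A q h] assms by auto
  finally show ?thesis .
qed

lemma lin_zero[simp]: "lin h 0 = 0"
  by (simp add: lin_def)

lemma lin_single:
  assumes "\<And>\<alpha>. h \<alpha> 0 = 0"
  shows "lin h (sg \<alpha> c) = h \<alpha> c"
  using assms by (simp add: lin_def)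

lemma lin_sum:
  assumes "\<And>\<alpha> x y. h \<alpha> (x + y) = h \<alpha> x + h \<alpha> y" "\<And>\<alpha>. h \<alpha> 0 = 0"
  shows "lin h (\<Sum>i\<in>I. p i) = (\<Sum>i\<in>I. lin h (p i))"
proof (induction I rule: infinite_finite_induct)
  case (insert x F)
  then show ?case by (simp add: lin_add[OF assms])
qed auto

lemma poly_expand: "p = (\<Sum>\<alpha>\<in>ks p. sg \<alpha> (lk p \<alpha>))"
proof (rule poly_mapping_eqI)
  fix k
  show "lk p k = lk (\<Sum>\<alpha>\<in>ks p. sg \<alpha> (lk p \<alpha>)) k"
    by (simp add: lookup_sum lookup_single when_def in_keys_iff)
qed

lemma poly_induct[case_names zero single add]:
  fixes p :: "('k, 'b::comm_monoid_add) mpoly"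
  assumes "Pr 0" "\<And>\<alpha> c. Pr (sg \<alpha> c)" "\<And>p q. Pr p \<Longrightarrow> Pr q \<Longrightarrow> Pr (p + q)"
  shows "Pr p"
proof -
  have "Pr (\<Sum>\<alpha>\<in>A. sg \<alpha> (lk p \<alpha>))" for A
    by (induction A rule: infinite_finite_induct) (auto intro: assms)
  then show ?thesis using poly_expand[of p] by metis
qed



definition mmono :: "('k \<Rightarrow>\<^sub>0 nat) \<Rightarrow> ('k \<Rightarrow> 'b::comm_semiring_1) \<Rightarrow> 'b" where
  "mmono \<alpha> a = (\<Prod>j\<in>ks \<alpha>. a j ^ lk \<alpha> j)"

abbreviation Ebox :: "('k \<Rightarrow>\<^sub>0 nat) \<Rightarrow> ('k \<Rightarrow>\<^sub>0 nat) set" where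
  "Ebox e \<equiv> {e'. \<forall>j. lk e' j \<le> lk e j}"

lemma hasse_lin: "hasse e p = lin (\<lambda>\<alpha> c. sg (\<alpha> - e) (of_nat (mbinom \<alpha> e) * c)) p"
  by (simp add: hasse_def lin_def)

lemma mpeval_lin: "mpeval p a = lin (\<lambda>\<alpha> c. c * mmono \<alpha> a) p"
  by (simp add: mpeval_def lin_def mmono_def)

lemma hasse_add: "hasse e (p + q) = hasse e p + hasse e q"
  unfolding hasse_lin by (rule lin_add) (simp_all add: distrib_left single_add)

lemma hasse_single: "hasse e (sg \<alpha> c) = sg (\<alpha> - e) (of_nat (mbinom \<alpha> e) * c)"
  unfolding hasse_lin by (rule lin_single) simp

lemma hasse_sum: "hasse e (\<Sum>i\<in>I. p i) = (\<Sum>i\<in>I. hasse e (p i))"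
  unfolding hasse_lin by (rule lin_sum) (simp_all add: distrib_left single_add)

lemma hasse_zero[simp]: "hasse e 0 = 0"
  unfolding hasse_lin by simp

lemma mpeval_add: "mpeval (p + q) a = mpeval p a + mpeval q a"
  unfolding mpeval_lin by (rule lin_add) (simp_all add: distrib_right)

lemma mpeval_single: "mpeval (sg \<alpha> c) a = c * mmono \<alpha> a"
  unfolding mpeval_lin by (rule lin_single) simp

lemma mpeval_sum: "mpeval (\<Sum>i\<in>I. p i) a = (\<Sum>i\<in>I. mpeval (p i) a)"
  unfolding mpeval_lin by (rule lin_sum) (simp_all add: distrib_right)

lemma mpeval_zero[simp]: "mpeval 0 a = 0"
  unfolding mpeval_lin by simp

lemma single_sum: "sg k (\<Sum>i\<in>I. f i) = (\<Sum>i\<in>I. sg k (f i))"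
  by (induction I rule: infinite_finite_induct) (auto simp: single_add)


lemma mdeg_UNIV: "mdeg (e::'k::finite \<Rightarrow>\<^sub>0 nat) = (\<Sum>j\<in>UNIV. lk e j)"
  unfolding mdeg_def by (rule sum.mono_neutral_left) (auto simp: in_keys_iff)

lemma mbinom_UNIV: "mbinom \<alpha> (e::'k::finite \<Rightarrow>\<^sub>0 nat) = (\<Prod>j\<in>UNIV. lk \<alpha> j choose lk e j)"
  unfolding mbinom_def by (rule prod.mono_neutral_left) (auto simp: in_keys_iff)

lemma mono_UNIV: "mmono (\<alpha>::'k::finite \<Rightarrow>\<^sub>0 nat) a = (\<Prod>j\<in>UNIV. a j ^ lk \<alpha> j)"
  unfolding mmono_def by (rule prod.mono_neutral_left) (auto simp: in_keys_iff)

lemma mdeg_add: "mdeg ((e::'k::finite \<Rightarrow>\<^sub>0 nat) + f) = mdeg e + mdeg f"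
  by (simp add: mdeg_UNIV lookup_add sum.distrib)

lemma mono_add: "mmono ((\<alpha>::'k::finite \<Rightarrow>\<^sub>0 nat) + \<beta>) a = mmono \<alpha> a * mmono \<beta> a"
  by (simp add: mono_UNIV lookup_add power_add prod.distrib)

lemma mpeval_mult:
  fixes p q :: "('k::finite, 'b::comm_ring_1) mpoly"
  shows "mpeval (p * q) a = mpeval p a * mpeval q a"
proof (induction p rule: poly_induct)
  case zero then show ?case by simp
next
  case (add p1 p2) then show ?case by (simp add: distrib_right mpeval_add)
next
  case (single \<alpha> c)
  show ?case
  proof (induction q rule: poly_induct)
    case zero then show ?case by simp
  next
    case (add p1 p2) then show ?case by (simp add: distrib_left mpeval_add)
  next
    case (single \<beta> d)
    then show ?case by (simp add: mult_single mpeval_single mono_add mult_ac)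
  qed
qed

lemma bij_Ebox: "bij_betw lk (Ebox (e::'k::finite \<Rightarrow>\<^sub>0 nat)) (PiE UNIV (\<lambda>j. {..lk e j}))"
proof (rule bij_betw_imageI)
  show "inj_on lk (Ebox e)" by (auto intro: inj_onI poly_mapping_eqI)
  show "lk ` Ebox e = PiE UNIV (\<lambda>j. {..lk e j})"
  proof
    show "lk ` Ebox e \<subseteq> PiE UNIV (\<lambda>j. {..lk e j})" by auto
    show "PiE UNIV (\<lambda>j. {..lk e j}) \<subseteq> lk ` Ebox e"
    proof
      fix f assume f: "f \<in> PiE UNIV (\<lambda>j. {..lk e j})"
      have "lk (Abs_poly_mapping f) = f" by simp
      moreover have "Abs_poly_mapping f \<in> Ebox e" using f by auto
      ultimately show "f \<in> lk ` Ebox e" by (metis image_eqI)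
    qed
  qed
qed

lemma finite_Ebox: "finite (Ebox (e::'k::finite \<Rightarrow>\<^sub>0 nat))"
  using bij_betw_finite[OF bij_Ebox[of e]] by (simp add: finite_PiE)

lemma mvandermonde:
  fixes \<alpha> \<beta> e :: "'k::finite \<Rightarrow>\<^sub>0 nat"
  shows "(\<Sum>e'\<in>Ebox e. mbinom \<alpha> e' * mbinom \<beta> (e - e')) = mbinom (\<alpha> + \<beta>) e"
proof -
  define G where "G = (\<lambda>j x. (lk \<alpha> j choose x) * (lk \<beta> j choose (lk e j - x)))"
  have "(\<Sum>e'\<in>Ebox e. mbinom \<alpha> e' * mbinom \<beta> (e - e')) = (\<Sum>e'\<in>Ebox e. (\<lambda>f. \<Prod>j\<in>UNIV. G j (f j)) (lk e'))"
    by (simp add: mbinom_UNIV G_def lookup_minus prod.distrib)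
  also have "\<dots> = (\<Sum>f\<in>PiE UNIV (\<lambda>j. {..lk e j}). \<Prod>j\<in>UNIV. G j (f j))"
    by (rule sum.reindex_bij_betw[OF bij_Ebox])
  also have "\<dots> = (\<Prod>j\<in>UNIV. \<Sum>x\<in>{..lk e j}. G j x)"
    by (rule prod_sum_PiE[symmetric]) auto
  also have "\<dots> = mbinom (\<alpha> + \<beta>) e"
    by (simp add: G_def vandermonde mbinom_UNIV lookup_add)
  finally show ?thesis .
qed

lemma mbinom_nz:
  fixes \<alpha> e :: "'k::finite \<Rightarrow>\<^sub>0 nat"
  assumes "mbinom \<alpha> e \<noteq> 0" shows "lk e j \<le> lk \<alpha> j"
proof -
  have "(lk \<alpha> j choose lk e j) \<noteq> 0" using assms by (auto simp: mbinom_UNIV)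
  then show ?thesis by (simp add: binomial_eq_0_iff)
qed

lemma leibniz_single:
  fixes \<alpha> \<beta> e :: "'k::finite \<Rightarrow>\<^sub>0 nat" and c d :: "'b::comm_ring_1"
  shows "hasse e (sg \<alpha> c * sg \<beta> d) = (\<Sum>e'\<in>Ebox e. hasse e' (sg \<alpha> c) * hasse (e - e') (sg \<beta> d))"
proof -
  have trm: "hasse e' (sg \<alpha> c) * hasse (e - e') (sg \<beta> d) =
      sg (\<alpha> + \<beta> - e) (of_nat (mbinom \<alpha> e' * mbinom \<beta> (e - e')) * (c * d))" if "e' \<in> Ebox e" for e'
  proof (cases "mbinom \<alpha> e' * mbinom \<beta> (e - e') = 0")
    case True
    then show ?thesis by (auto simp: hasse_single mult_single)
  next
    case False
    then have nz: "mbinom \<alpha> e' \<noteq> 0" "mbinom \<beta> (e - e') \<noteq> 0" by auto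
    have "(\<alpha> - e') + (\<beta> - (e - e')) = \<alpha> + \<beta> - e"
    proof (rule poly_mapping_eqI)
      fix j
      show "lk ((\<alpha> - e') + (\<beta> - (e - e'))) j = lk (\<alpha> + \<beta> - e) j"
        using mbinom_nz[OF nz(1), of j] mbinom_nz[OF nz(2), of j] that
        by (simp add: lookup_add lookup_minus)
    qed
    then show ?thesis by (simp add: hasse_single mult_single mult_ac)
  qed
  have "(\<Sum>e'\<in>Ebox e. hasse e' (sg \<alpha> c) * hasse (e - e') (sg \<beta> d)) =
        (\<Sum>e'\<in>Ebox e. sg (\<alpha> + \<beta> - e) (of_nat (mbinom \<alpha> e' * mbinom \<beta> (e - e')) * (c * d)))"
    by (rule sum.cong) (auto simp: trm)
  also have "\<dots> = sg (\<alpha> + \<beta> - e) (of_nat (\<Sum>e'\<in>Ebox e. mbinom \<alpha> e' * mbinom \<beta> (e - e')) * (c * d))"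
    by (simp add: single_sum of_nat_sum sum_distrib_right)
  also have "\<dots> = hasse e (sg \<alpha> c * sg \<beta> d)"
    by (simp add: mvandermonde hasse_single mult_single)
  finally show ?thesis by simp
qed

lemma hasse_mult:
  fixes p q :: "('k::finite, 'b::comm_ring_1) mpoly"
  shows "hasse e (p * q) = (\<Sum>e'\<in>Ebox e. hasse e' p * hasse (e - e') q)"
proof (induction p rule: poly_induct)
  case zero then show ?case by simp
next
  case (add p1 p2) then show ?case by (simp add: distrib_right hasse_add sum.distrib)
next
  case (single \<alpha> c)
  show ?case
  proof (induction q rule: poly_induct)
    case zero then show ?case by simp
  next
    case (add p1 p2) then show ?case by (simp add: distrib_left hasse_add sum.distrib)
  next
    case (single \<beta> d)
    then show ?case by (rule leibniz_single)
  qed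
qed



lemma lookup_map0: "\<phi> 0 = 0 \<Longrightarrow> lk (Poly_Mapping.map \<phi> p) k = \<phi> (lk p k)"
  by (simp add: map.rep_eq when_def)

lemma map_zero0[simp]: "Poly_Mapping.map \<phi> 0 = 0"
  by (rule poly_mapping_eqI) (simp add: map.rep_eq)

lemma map_add0:
  assumes "\<phi> 0 = 0" "\<And>x y. \<phi> (x + y) = \<phi> x + \<phi> y"
  shows "Poly_Mapping.map \<phi> (p + q) = Poly_Mapping.map \<phi> p + Poly_Mapping.map \<phi> q"
  by (rule poly_mapping_eqI) (simp add: lookup_map0 assms lookup_add)

lemma hasse_map:
  fixes \<phi> :: "'b::comm_semiring_1 \<Rightarrow> 'c::comm_semiring_1"
  assumes "\<phi> 0 = 0" "\<And>x y. \<phi> (x + y) = \<phi> x + \<phi> y" "\<And>k x. \<phi> (of_nat k * x) = of_nat k * \<phi> x"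
  shows "hasse u (Poly_Mapping.map \<phi> p) = Poly_Mapping.map \<phi> (hasse u p)"
proof (induction p rule: poly_induct)
  case zero then show ?case by (simp add: assms)
next
  case (single \<alpha> c) then show ?case by (simp add: hasse_single assms)
next
  case (add p q) then show ?case by (simp add: map_add0 assms hasse_add)
qed

lemma rpoly_add: "rpoly (p + q) = rpoly p + rpoly q"
  by (simp add: rpoly_def)
lemma rpoly_mult: "rpoly (p * q) = rpoly p * rpoly q"
  by (simp add: rpoly_def)
lemma rpoly_zero[simp]: "rpoly 0 = 0"
  by (simp add: rpoly_def Zero_fract_def)
lemma rpoly_one[simp]: "rpoly 1 = 1"
  by (simp add: rpoly_def One_fract_def)
lemma rpoly_of_nat: "rpoly (of_nat n) = of_nat n"
  unfolding rpoly_def by (rule of_nat_fract[symmetric])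
lemma sg_of_nat_mult: "sg e1 (of_nat k * x) = of_nat k * (sg e1 (x::'b::comm_semiring_1) :: ('k::comm_monoid_add \<Rightarrow>\<^sub>0 'b))"
  using mult_single[of 0 "of_nat k" e1 x] by simp
lemma rpoly_sum: "rpoly (\<Sum>i\<in>I. f i) = (\<Sum>i\<in>I. rpoly (f i))"
  by (induction I rule: infinite_finite_induct) (auto simp: rpoly_add)
lemma rpoly_prod: "rpoly (\<Prod>i\<in>I. f i) = (\<Prod>i\<in>I. rpoly (f i))"
  by (induction I rule: infinite_finite_induct) (auto simp: rpoly_mult)
lemma rpoly_power: "rpoly (p ^ n) = rpoly p ^ n"
  by (induction n) (auto simp: rpoly_mult)
lemma rpoly_inj: "rpoly p = rpoly q \<Longrightarrow> p = q"
  by (simp add: rpoly_def eq_fract)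
lemma rconst_inj: "rconst x = rconst y \<Longrightarrow> x = y"
  unfolding rconst_def using rpoly_inj[unfolded rpoly_def] by (metis lookup_single_eq)

lemma sg0_mult: "sg 0 (x * y) = sg 0 x * (sg 0 (y::'b::comm_semiring_1) :: ('k::comm_monoid_add \<Rightarrow>\<^sub>0 'b))"
  by (simp add: mult_single)
lemma sg0_power: "sg 0 (x ^ n) = (sg 0 (x::'b::comm_semiring_1) :: ('k::comm_monoid_add \<Rightarrow>\<^sub>0 'b)) ^ n"
  by (induction n) (auto simp: sg0_mult)
lemma sg0_prod: "sg 0 (\<Prod>i\<in>I. f i) = (\<Prod>i\<in>I. (sg 0 (f i::'b::comm_semiring_1) :: ('k::comm_monoid_add \<Rightarrow>\<^sub>0 'b)))"
  by (induction I rule: infinite_finite_induct) (auto simp: sg0_mult)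

lemma mono_rconst:
  fixes a :: "'k::{finite,linorder} \<Rightarrow> 'a::field"
  shows "mmono \<alpha> (\<lambda>j. rconst (a j)) = (rpoly (sg 0 (mmono \<alpha> a)) :: ('k,'a) ratfun)"
  by (simp add: mmono_def rconst_def rpoly_prod rpoly_power sg0_prod sg0_power flip: rpoly_def)

lemma eval_map_rpoly:
  fixes a :: "'k::{finite,linorder} \<Rightarrow> 'a::field" and p :: "('k,'a) mpoly" and e1 :: "'k \<Rightarrow>\<^sub>0 nat"
  shows "mpeval (Poly_Mapping.map (\<lambda>c. rpoly (sg e1 c)) p) (\<lambda>j. rconst (a j)) = rpoly (sg e1 (mpeval p a))"
proof (induction p rule: poly_induct)
  case zero then show ?case by simp
next
  case (single \<alpha> c)
  show ?case
    by (simp add: mpeval_single mono_rconst flip: rpoly_mult) (simp add: mult_single)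
next
  case (add p q) then show ?case
    by (simp add: map_add0 single_add rpoly_add mpeval_add)
qed

lemma choose_comp: "(a choose x) * ((a - x) choose y) = ((x + y) choose y) * (a choose (x + y))"
proof (cases "x + y \<le> a")
  case True
  then have "(a choose (x+y)) * ((x+y) choose x) = (a choose x) * ((a - x) choose (x + y - x))"
    by (intro choose_mult) auto
  then show ?thesis by (simp add: binomial_symmetric[of x "x+y"] mult_ac)
next
  case False
  then show ?thesis by (cases "x \<le> a") (auto simp: binomial_eq_0)
qed

lemma mbinom_comp:
  fixes \<alpha> e1 u :: "'k::finite \<Rightarrow>\<^sub>0 nat"
  shows "mbinom \<alpha> e1 * mbinom (\<alpha> - e1) u = mbinom (e1 + u) u * mbinom \<alpha> (e1 + u)"
  by (simp add: mbinom_UNIV lookup_minus lookup_add choose_comp flip: prod.distrib)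

lemma hasse_comp_eval:
  fixes f :: "('k::finite, 'b::comm_ring_1) mpoly"
  shows "mpeval (hasse u (hasse e1 f)) a = of_nat (mbinom (e1 + u) u) * mpeval (hasse (e1 + u) f) a"
proof (induction f rule: poly_induct)
  case zero then show ?case by simp
next
  case (single \<alpha> c)
  have "\<alpha> - e1 - u = \<alpha> - (e1 + u)"
    by (rule poly_mapping_eqI) (simp add: lookup_minus lookup_add)
  moreover have "of_nat (mbinom (\<alpha> - e1) u) * (of_nat (mbinom \<alpha> e1) * c) =
      (of_nat (mbinom (e1 + u) u) * (of_nat (mbinom \<alpha> (e1 + u)) * c) :: 'b)"
    using arg_cong[OF mbinom_comp[of \<alpha> e1 u], of "of_nat :: nat \<Rightarrow> 'b"]
    by (simp add: mult_ac)
  ultimately show ?case by (simp add: hasse_single mpeval_single mult_ac)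
next
  case (add p q) then show ?case by (simp add: hasse_add mpeval_add distrib_left)
qed

lemma lookup_le_mdeg: "lk (e::'k::finite \<Rightarrow>\<^sub>0 nat) j \<le> mdeg e"
  unfolding mdeg_UNIV by (rule member_le_sum) auto

lemma finite_expvecs: "finite (expvecs n :: ('k::finite \<Rightarrow>\<^sub>0 nat) set)"
proof -
  have "expvecs n \<subseteq> Ebox (Abs_poly_mapping (\<lambda>_::'k. n))"
    using lookup_le_mdeg by (auto simp: expvecs_def)
  then show ?thesis using finite_Ebox finite_subset by blast
qed

lemma lookup_DeltaAt:
  fixes f :: "('k::finite, 'a::field) mpoly"
  shows "lk (DeltaAt f N a) \<gamma> = (if mdeg \<gamma> = N then mpeval (hasse \<gamma> f) a else 0)"
proof -
  have "lk (DeltaAt f N a) \<gamma> = (\<Sum>e\<in>expvecs N. if e = \<gamma> then mpeval (hasse e f) a else 0)"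
    by (simp add: DeltaAt_def lookup_sum lookup_single when_def)
  also have "\<dots> = (if mdeg \<gamma> = N then mpeval (hasse \<gamma> f) a else 0)"
    by (subst sum.delta[OF finite_expvecs]) (simp add: expvecs_def)
  finally show ?thesis .
qed

lemma deltapoly_hasse_eval:
  fixes f :: "('k::{finite,linorder}, 'a::field) mpoly" and a :: "'k \<Rightarrow> 'a"
  assumes "n + mdeg u < s" "\<forall>i<s. Pa i = DeltaAt f i a"
  shows "mpeval (hasse u (DeltaPoly f n)) (\<lambda>j. rconst (a j)) = rpoly (tau n u Pa)"
proof -
  have phi: "hasse u (Poly_Mapping.map (\<lambda>c. rpoly (sg e1 c)) p) = Poly_Mapping.map (\<lambda>c. rpoly (sg e1 c)) (hasse u p)"
    for e1 and p :: "('k,'a) mpoly"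
    by (rule hasse_map) (simp_all add: single_add rpoly_add rpoly_mult rpoly_of_nat sg_of_nat_mult)
  have "mpeval (hasse u (DeltaPoly f n)) (\<lambda>j. rconst (a j)) =
      (\<Sum>e1\<in>expvecs n. rpoly (sg e1 (of_nat (mbinom (e1 + u) u) * mpeval (hasse (e1 + u) f) a)))"
    by (simp add: DeltaPoly_def hasse_sum mpeval_sum phi eval_map_rpoly hasse_comp_eval)
  also have "\<dots> = rpoly (tau n u Pa)"
    using assms by (simp add: tau_def rpoly_sum lookup_DeltaAt expvecs_def mdeg_add add.commute)
  finally show ?thesis .
qed



lemma mdeg_le_tdeg: "\<alpha> \<in> ks p \<Longrightarrow> mdeg \<alpha> \<le> tdeg p"
  unfolding tdeg_def by (rule Max_ge) auto

lemma tdeg_le: "(\<And>\<alpha>. \<alpha> \<in> ks p \<Longrightarrow> mdeg \<alpha> \<le> n) \<Longrightarrow> tdeg p \<le> n"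
  unfolding tdeg_def by (subst Max_le_iff) auto

lemma tdeg_in: "p \<noteq> 0 \<Longrightarrow> \<exists>\<alpha>\<in>ks p. mdeg \<alpha> = tdeg p"
proof -
  assume "p \<noteq> 0"
  then obtain \<beta> where \<beta>: "\<beta> \<in> ks p" by (metis keys_eq_empty ex_in_conv)
  have "tdeg p \<in> insert 0 (mdeg ` ks p)" unfolding tdeg_def by (rule Max_in) auto
  then show ?thesis
  proof
    assume "tdeg p = 0"
    then show ?thesis using mdeg_le_tdeg[OF \<beta>] \<beta> by auto
  qed auto
qed

lemma mdeg_minus_le: "mdeg ((\<alpha>::'k::finite \<Rightarrow>\<^sub>0 nat) - e) \<le> mdeg \<alpha>"
  unfolding mdeg_UNIV by (rule sum_mono) (simp add: lookup_minus)

lemma mdeg_single: "mdeg (sg (v::'k::finite) n) = n"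
  unfolding mdeg_UNIV by (simp add: lookup_single when_def)

lemma mmono_zero[simp]: "mmono 0 a = 1"
  by (simp add: mmono_def)

lemma mbinom_self: "mbinom (\<alpha>::'k::finite \<Rightarrow>\<^sub>0 nat) \<alpha> = 1"
  by (simp add: mbinom_UNIV)

lemma eval_hasse:
  "mpeval (hasse e P) a = (\<Sum>\<beta>\<in>ks P. of_nat (mbinom \<beta> e) * lk P \<beta> * mmono (\<beta> - e) a)"
  by (simp add: hasse_def mpeval_sum mpeval_single)

definition vord :: "('k::finite, 'b::field) mpoly \<Rightarrow> ('k \<Rightarrow> 'b) \<Rightarrow> nat" where
  "vord P a = (LEAST n. \<exists>e. mdeg e = n \<and> mpeval (hasse e P) a \<noteq> 0)"

lemma vord_exists:
  fixes P :: "('k::finite, 'b::field) mpoly"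
  assumes "P \<noteq> 0"
  shows "\<exists>\<alpha>. mdeg \<alpha> = tdeg P \<and> mpeval (hasse \<alpha> P) a \<noteq> 0"
proof -
  obtain \<alpha> where \<alpha>: "\<alpha> \<in> ks P" "mdeg \<alpha> = tdeg P" using tdeg_in[OF assms] by blast
  have z: "mbinom \<beta> \<alpha> = 0" if "\<beta> \<in> ks P" "\<beta> \<noteq> \<alpha>" for \<beta>
  proof (rule ccontr)
    assume "mbinom \<beta> \<alpha> \<noteq> 0"
    then have le: "\<And>j. lk \<alpha> j \<le> lk \<beta> j" using mbinom_nz by blast
    have "mdeg \<beta> \<le> mdeg \<alpha>" using mdeg_le_tdeg[OF that(1)] \<alpha> by simp
    then have s2: "(\<Sum>j\<in>UNIV. lk \<beta> j) \<le> (\<Sum>j\<in>UNIV. lk \<alpha> j)" by (simp add: mdeg_UNIV)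
    have s1: "(\<Sum>j\<in>UNIV. lk \<alpha> j) \<le> (\<Sum>j\<in>UNIV. lk \<beta> j)" by (rule sum_mono) (simp add: le)
    have seq: "(\<Sum>j\<in>UNIV. lk \<alpha> j) = (\<Sum>j\<in>UNIV. lk \<beta> j)" using s1 s2 by simp
    have "lk \<alpha> j = lk \<beta> j" for j by (rule sum_mono_inv[OF seq]) (auto simp: le)
    then have "\<beta> = \<alpha>" by (auto intro: poly_mapping_eqI)
    then show False using that by simp
  qed
  have "mpeval (hasse \<alpha> P) a = of_nat (mbinom \<alpha> \<alpha>) * lk P \<alpha> * mmono (\<alpha> - \<alpha>) a"
    unfolding eval_hasse by (rule sum.remove[OF finite_keys \<alpha>(1), THEN trans]) (simp add: z)
  also have "\<dots> = lk P \<alpha>" by (simp add: mbinom_self)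
  finally show ?thesis using \<alpha> by (auto simp: in_keys_iff)
qed

lemma vord_le: "mpeval (hasse e P) a \<noteq> 0 \<Longrightarrow> vord P a \<le> mdeg e"
  unfolding vord_def by (rule Least_le) blast

lemma vord_witness: "P \<noteq> 0 \<Longrightarrow> \<exists>e. mdeg e = vord P a \<and> mpeval (hasse e P) a \<noteq> 0"
  unfolding vord_def by (rule LeastI_ex) (use vord_exists in blast)

lemma vord_le_tdeg: "P \<noteq> 0 \<Longrightarrow> vord P a \<le> tdeg P"
  using vord_exists vord_le by metis

lemma vord_ge:
  assumes "P \<noteq> 0" "\<And>e. mdeg e < t \<Longrightarrow> mpeval (hasse e P) a = 0"
  shows "t \<le> vord P a"
  using vord_witness[OF assms(1), of a] assms(2) by (metis not_le)

definition rem :: "'k \<Rightarrow> ('k \<Rightarrow>\<^sub>0 nat) \<Rightarrow> ('k \<Rightarrow>\<^sub>0 nat)" where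
  "rem v \<alpha> = \<alpha> - sg v (lk \<alpha> v)"

lemma lookup_rem: "lk (rem v \<alpha>) j = (if j = v then 0 else lk \<alpha> j)"
  by (simp add: rem_def lookup_minus lookup_single when_def)

lemma rem_plus: "rem v \<alpha> + sg v (lk \<alpha> v) = \<alpha>"
  by (rule poly_mapping_eqI) (simp add: lookup_add lookup_rem lookup_single when_def)

lemma mdeg_rem: "mdeg (rem v (\<alpha>::'k::finite \<Rightarrow>\<^sub>0 nat)) + lk \<alpha> v = mdeg \<alpha>"
  using arg_cong[OF rem_plus[of v \<alpha>], of mdeg] by (simp add: mdeg_add mdeg_single)

lemma keys_rem: "ks (rem v \<alpha>) \<subseteq> ks \<alpha> - {v}"
  by (auto simp: in_keys_iff lookup_rem split: if_splits)

definition slice :: "('k, 'b::comm_monoid_add) mpoly \<Rightarrow> 'k \<Rightarrow> nat \<Rightarrow> ('k, 'b) mpoly" where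
  "slice P v t = (\<Sum>\<alpha>\<in>{\<alpha>\<in>ks P. lk \<alpha> v = t}. sg (rem v \<alpha>) (lk P \<alpha>))"

lemma slice_keys: "\<beta> \<in> ks (slice P v t) \<Longrightarrow> \<exists>\<alpha>\<in>ks P. lk \<alpha> v = t \<and> \<beta> = rem v \<alpha>"
proof -
  assume h: "\<beta> \<in> ks (slice P v t)"
  have "ks (slice P v t) \<subseteq> (\<Union>\<alpha>\<in>{\<alpha>\<in>ks P. lk \<alpha> v = t}. ks (sg (rem v \<alpha>) (lk P \<alpha>)))"
    unfolding slice_def by (rule keys_sum)
  from subsetD[OF this h]
  have "\<beta> \<in> (\<Union>\<alpha>\<in>{\<alpha>\<in>ks P. lk \<alpha> v = t}. ks (sg (rem v \<alpha>) (lk P \<alpha>)))" .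
  then obtain \<alpha> where \<alpha>: "\<alpha> \<in> {\<alpha>\<in>ks P. lk \<alpha> v = t}" "\<beta> \<in> ks (sg (rem v \<alpha>) (lk P \<alpha>))"
    by blast
  from \<alpha>(2) have "\<beta> = rem v \<alpha>" using keys_single by (metis empty_iff singletonD)
  then show ?thesis using \<alpha>(1) by blast
qed

lemma slice_lookup:
  assumes "\<alpha>0 \<in> ks P" "lk \<alpha>0 v = t"
  shows "lk (slice P v t) (rem v \<alpha>0) = lk P \<alpha>0"
proof -
  have eq: "(rem v \<alpha> = rem v \<alpha>0) = (\<alpha> = \<alpha>0)" if "lk \<alpha> v = t" for \<alpha>
  proof
    assume "rem v \<alpha> = rem v \<alpha>0"
    then have h: "rem v \<alpha> + sg v (lk \<alpha> v) = rem v \<alpha>0 + sg v (lk \<alpha>0 v)" using that assms(2) by simp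
    have "\<alpha> = rem v \<alpha> + sg v (lk \<alpha> v)" by (rule rem_plus[symmetric])
    also have "\<dots> = rem v \<alpha>0 + sg v (lk \<alpha>0 v)" by (rule h)
    also have "\<dots> = \<alpha>0" by (rule rem_plus)
    finally show "\<alpha> = \<alpha>0" .
  next
    assume "\<alpha> = \<alpha>0" then show "rem v \<alpha> = rem v \<alpha>0" by simp
  qed
  have fin: "finite {\<alpha>\<in>ks P. lk \<alpha> v = t}" by simp
  have "lk (slice P v t) (rem v \<alpha>0) = (\<Sum>\<alpha>\<in>{\<alpha>\<in>ks P. lk \<alpha> v = t}. if \<alpha> = \<alpha>0 then lk P \<alpha> else 0)"
    unfolding slice_def lookup_sum lookup_single when_def
  proof (rule sum.cong[OF refl])
    fix \<alpha> assume "\<alpha> \<in> {\<alpha>\<in>ks P. lk \<alpha> v = t}"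
    then have "(rem v \<alpha> = rem v \<alpha>0) = (\<alpha> = \<alpha>0)" using eq by blast
    then show "(if rem v \<alpha> = rem v \<alpha>0 then lk P \<alpha> else 0) = (if \<alpha> = \<alpha>0 then lk P \<alpha> else 0)"
      by simp
  qed
  also have "\<dots> = lk P \<alpha>0"
    by (subst sum.delta[OF fin]) (simp add: assms)
  finally show ?thesis .
qed

definition uh :: "nat \<Rightarrow> 'b::comm_ring_1 poly \<Rightarrow> 'b \<Rightarrow> 'b" where
  "uh r g b = coeff (pcompose g [:b, 1:]) r"

lemma pcompose_power: "pcompose (p ^ n) q = (pcompose p q) ^ n"
  by (induction n) (simp_all add: pcompose_mult pcompose_1)

lemma uh_monom:
  "uh r (monom c n) b = c * (if r \<le> n then of_nat (n choose r) * b ^ (n - r) else 0)"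
proof -
  have "pcompose (monom c n) [:b, 1:] = smult c ([:b, 1:] ^ n)"
    by (simp add: monom_altdef pcompose_smult pcompose_power pcompose_pCons)
  moreover have "coeff ([:b, 1:] ^ n) r = (if r \<le> n then of_nat (n choose r) * b ^ (n - r) else 0)"
  proof (cases "r \<le> n")
    case True then show ?thesis by (simp add: coeff_linear_poly_power)
  next
    case False
    have "degree ([:b, 1:] ^ n) \<le> n"
      using degree_power_le[of "[:b, 1:]" n] by simp
    then show ?thesis using False by (simp add: coeff_eq_0)
  qed
  ultimately show ?thesis by (simp add: uh_def)
qed

lemma uh_sum: "uh r (\<Sum>i\<in>I. g i) b = (\<Sum>i\<in>I. uh r (g i) b)"
  by (induction I rule: infinite_finite_induct) (simp_all add: uh_def pcompose_add)

lemma uh_order: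
  fixes g :: "'b::field poly"
  assumes "g \<noteq> 0"
  shows "uh (order b g) g b \<noteq> 0"
proof -
  obtain h where h: "g = [:- b, 1:] ^ order b g * h" "\<not> [:- b, 1:] dvd h"
    using order_decomp[OF assms] by blast
  have hb: "poly h b \<noteq> 0" using h(2) poly_eq_0_iff_dvd by blast
  have "pcompose [:- b, 1:] [:b, 1:] = [:0, 1:]"
    by (simp add: pcompose_pCons)
  then have "pcompose g [:b, 1:] = monom 1 (order b g) * pcompose h [:b, 1:]"
    by (subst h(1)) (simp add: pcompose_mult pcompose_power monom_altdef)
  then have "uh (order b g) g b = coeff (pcompose h [:b, 1:]) 0"
    by (simp add: uh_def coeff_monom_mult)
  also have "\<dots> = poly h b" by simp
  finally show ?thesis using hb by simp
qed

lemma sum_order_S: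
  fixes g :: "'b::field poly"
  assumes "g \<noteq> 0" "finite S"
  shows "(\<Sum>b\<in>S. order b g) \<le> degree g"
proof -
  have "(\<Sum>b\<in>S. order b g) = (\<Sum>b\<in>S \<inter> {x. poly g x = 0}. order b g)"
    using assms by (intro sum.mono_neutral_right) (auto simp: order_root)
  also have "\<dots> \<le> (\<Sum>b | poly g b = 0. order b g)"
    using poly_roots_finite[OF assms(1)] by (intro sum_mono2) auto
  also have "\<dots> \<le> degree g" by (rule sum_order_le_degree[OF assms(1)])
  finally show ?thesis .
qed



lemma prod_split_at: "(\<Prod>j\<in>UNIV. F j) = F v * (\<Prod>j\<in>UNIV - {v}. F (j::'k::finite))"
  by (simp add: prod.remove)

lemma mbinom_split:
  fixes \<alpha> e' :: "'k::finite \<Rightarrow>\<^sub>0 nat"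
  assumes "lk e' v = 0"
  shows "mbinom \<alpha> (e' + sg v r) = mbinom (rem v \<alpha>) e' * (lk \<alpha> v choose r)"
proof -
  have "mbinom \<alpha> (e' + sg v r) = (lk \<alpha> v choose r) * (\<Prod>j\<in>UNIV - {v}. lk \<alpha> j choose lk (e' + sg v r) j)"
    unfolding mbinom_UNIV by (subst prod_split_at[of _ v]) (simp add: lookup_add assms)
  also have "(\<Prod>j\<in>UNIV - {v}. lk \<alpha> j choose lk (e' + sg v r) j) = (\<Prod>j\<in>UNIV - {v}. lk (rem v \<alpha>) j choose lk e' j)"
    by (rule prod.cong) (auto simp: lookup_add lookup_single lookup_rem when_def)
  also have "\<dots> = mbinom (rem v \<alpha>) e'"
    unfolding mbinom_UNIV by (subst prod_split_at[of _ v]) (simp add: lookup_rem assms)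
  finally show ?thesis by simp
qed

lemma mmono_split:
  fixes \<alpha> e' :: "'k::finite \<Rightarrow>\<^sub>0 nat"
  assumes "lk e' v = 0"
  shows "mmono (\<alpha> - (e' + sg v r)) (a'(v := b)) = mmono (rem v \<alpha> - e') a' * b ^ (lk \<alpha> v - r)"
proof -
  have "mmono (\<alpha> - (e' + sg v r)) (a'(v := b)) = b ^ (lk \<alpha> v - r) * (\<Prod>j\<in>UNIV - {v}. (a'(v := b)) j ^ lk (\<alpha> - (e' + sg v r)) j)"
    unfolding mono_UNIV by (subst prod_split_at[of _ v]) (simp add: lookup_add lookup_minus assms)
  also have "(\<Prod>j\<in>UNIV - {v}. (a'(v := b)) j ^ lk (\<alpha> - (e' + sg v r)) j) = (\<Prod>j\<in>UNIV - {v}. a' j ^ lk (rem v \<alpha> - e') j)"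
    by (rule prod.cong) (auto simp: lookup_add lookup_minus lookup_single lookup_rem when_def)
  also have "\<dots> = mmono (rem v \<alpha> - e') a'"
    unfolding mono_UNIV by (subst prod_split_at[of _ v]) (simp add: lookup_rem lookup_minus assms)
  finally show ?thesis by (simp only: ac_simps)
qed

lemma slice_bound:
  fixes P :: "('k::finite, 'b::field) mpoly"
  assumes P0: "P \<noteq> 0" and finS: "finite S" and t_def: "t = Max ((\<lambda>\<alpha>. lk \<alpha> v) ` ks P)"
  shows "(\<Sum>b\<in>S. vord P (a'(v := b))) \<le> card S * vord (slice P v t) a' + t"
proof -
  define A where "A = {\<alpha>\<in>ks P. lk \<alpha> v = t}"
  have finK: "finite ((\<lambda>\<alpha>. lk \<alpha> v) ` ks P)" by simp
  have neK: "ks P \<noteq> {}" using P0 by simp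
  have "t \<in> (\<lambda>\<alpha>. lk \<alpha> v) ` ks P" using Max_in[OF finK] neK t_def by auto
  then obtain \<alpha>0 where \<alpha>0: "\<alpha>0 \<in> ks P" "lk \<alpha>0 v = t" by auto
  have tmax: "lk \<alpha> v \<le> t" if "\<alpha> \<in> ks P" for \<alpha> using t_def finK that by (auto intro: Max_ge)
  let ?Pt = "slice P v t"
  have Pt0: "?Pt \<noteq> 0"
  proof
    assume "?Pt = 0"
    then have "lk P \<alpha>0 = 0" using slice_lookup[OF \<alpha>0] by simp
    then show False using \<alpha>0(1) by (simp add: in_keys_iff)
  qed
  obtain e' where e': "mdeg e' = vord ?Pt a'" "mpeval (hasse e' ?Pt) a' \<noteq> 0"
    using vord_witness[OF Pt0] by blast
  have evPt: "mpeval (hasse e' ?Pt) a' = (\<Sum>\<alpha>\<in>A. of_nat (mbinom (rem v \<alpha>) e') * lk P \<alpha> * mmono (rem v \<alpha> - e') a')"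
    by (simp add: slice_def A_def hasse_sum hasse_single mpeval_sum mpeval_single)
  have e'v: "lk e' v = 0"
  proof (rule ccontr)
    assume h: "lk e' v \<noteq> 0"
    have z: "mbinom (rem v \<alpha>) e' = 0" for \<alpha>
    proof (rule ccontr)
      assume "mbinom (rem v \<alpha>) e' \<noteq> 0"
      from mbinom_nz[OF this, of v] h show False by (simp add: lookup_rem)
    qed
    have "mpeval (hasse e' ?Pt) a' = 0" unfolding evPt by (simp add: z)
    with e'(2) show False by simp
  qed
  define cf where "cf \<alpha> = of_nat (mbinom (rem v \<alpha>) e') * lk P \<alpha> * mmono (rem v \<alpha> - e') a'" for \<alpha>
  define g where "g = (\<Sum>\<alpha>\<in>ks P. monom (cf \<alpha>) (lk \<alpha> v))"
  have coeff_g: "coeff g i = (\<Sum>\<alpha>\<in>{\<alpha>\<in>ks P. lk \<alpha> v = i}. cf \<alpha>)" for i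
    unfolding g_def coeff_sum coeff_monom by (simp add: sum.inter_filter)
  have gt: "coeff g t \<noteq> 0" using e'(2) evPt coeff_g[of t] by (simp add: A_def cf_def)
  then have g0: "g \<noteq> 0" by auto
  have degg: "degree g \<le> t"
  proof (rule degree_le, intro allI impI)
    fix i assume "t < i"
    then have e: "{\<alpha>\<in>ks P. lk \<alpha> v = i} = {}" using tmax by fastforce
    show "coeff g i = 0" by (simp only: coeff_g e sum.empty)
  qed
  have key: "mpeval (hasse (e' + sg v r) P) (a'(v := b)) = uh r g b" for r b
  proof -
    have "mpeval (hasse (e' + sg v r) P) (a'(v := b)) =
        (\<Sum>\<alpha>\<in>ks P. of_nat (mbinom \<alpha> (e' + sg v r)) * lk P \<alpha> * mmono (\<alpha> - (e' + sg v r)) (a'(v := b)))"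
      by (rule eval_hasse)
    also have "\<dots> = (\<Sum>\<alpha>\<in>ks P. cf \<alpha> * (if r \<le> lk \<alpha> v then of_nat (lk \<alpha> v choose r) * b ^ (lk \<alpha> v - r) else 0))"
    proof (rule sum.cong[OF refl])
      fix \<alpha>
      show "of_nat (mbinom \<alpha> (e' + sg v r)) * lk P \<alpha> * mmono (\<alpha> - (e' + sg v r)) (a'(v := b)) =
          cf \<alpha> * (if r \<le> lk \<alpha> v then of_nat (lk \<alpha> v choose r) * b ^ (lk \<alpha> v - r) else 0)"
        by (cases "r \<le> lk \<alpha> v")
           (simp_all add: mbinom_split[OF e'v] mmono_split[OF e'v] cf_def mult_ac binomial_eq_0)
    qed
    also have "\<dots> = uh r g b" by (simp add: g_def uh_sum uh_monom)
    finally show ?thesis .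
  qed
  have pt: "vord P (a'(v := b)) \<le> vord ?Pt a' + order b g" for b
  proof -
    have "mpeval (hasse (e' + sg v (order b g)) P) (a'(v := b)) \<noteq> 0" using key uh_order[OF g0] by simp
    then have "vord P (a'(v := b)) \<le> mdeg (e' + sg v (order b g))" by (rule vord_le)
    then show ?thesis by (simp add: mdeg_add mdeg_single e'(1))
  qed
  have "(\<Sum>b\<in>S. vord P (a'(v := b))) \<le> (\<Sum>b\<in>S. vord ?Pt a' + order b g)"
    by (rule sum_mono) (rule pt)
  also have "\<dots> = card S * vord ?Pt a' + (\<Sum>b\<in>S. order b g)" by (simp add: sum.distrib)
  also have "\<dots> \<le> card S * vord ?Pt a' + t" using sum_order_S[OF g0 finS] degg by simp
  finally show ?thesis .
qed


lemma mdeg_zero[simp]: "mdeg 0 = 0"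
  by (simp add: mdeg_def)

lemma dkss:
  fixes S :: "'b::field set" and V :: "'k::finite set" and P :: "('k, 'b) mpoly"
  assumes finS: "finite S"
  shows "finite V \<Longrightarrow> P \<noteq> 0 \<Longrightarrow> (\<forall>\<alpha>\<in>ks P. ks \<alpha> \<subseteq> V) \<Longrightarrow>
    card S * (\<Sum>a\<in>PiE V (\<lambda>_. S). vord P a) \<le> tdeg P * card S ^ card V"
proof (induction V arbitrary: P rule: finite_induct)
  case (empty P)
  have P0: "P \<noteq> 0" and K: "\<forall>\<alpha>\<in>ks P. ks \<alpha> \<subseteq> {}" using empty.prems by auto
  have "tdeg P \<le> 0"
  proof (rule tdeg_le)
    fix \<alpha> assume "\<alpha> \<in> ks P"
    then have "\<alpha> = 0" using K by auto
    then show "mdeg \<alpha> \<le> 0" by simp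
  qed
  then have "vord P a = 0" for a using vord_le_tdeg[OF P0, of a] by simp
  then show "card S * (\<Sum>a\<in>PiE {} (\<lambda>_. S). vord P a) \<le> tdeg P * card S ^ card {}" by simp
next
  case (insert v V P)
  have P0: "P \<noteq> 0" and K: "\<forall>\<alpha>\<in>ks P. ks \<alpha> \<subseteq> insert v V" using insert.prems by auto
  note IH = insert.IH
  have finV: "finite V" and vV: "v \<notin> V" using insert.hyps by auto
  define t where "t = Max ((\<lambda>\<alpha>. lk \<alpha> v) ` ks P)"
  let ?Pt = "slice P v t"
  have finK: "finite ((\<lambda>\<alpha>. lk \<alpha> v) ` ks P)" by simp
  have neK: "ks P \<noteq> {}" using P0 by simp
  have "t \<in> (\<lambda>\<alpha>. lk \<alpha> v) ` ks P" using Max_in[OF finK] neK t_def by auto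
  then obtain \<alpha>0 where \<alpha>0: "\<alpha>0 \<in> ks P" "lk \<alpha>0 v = t" by auto
  have Pt0: "?Pt \<noteq> 0"
  proof
    assume "?Pt = 0"
    then have "lk P \<alpha>0 = 0" using slice_lookup[OF \<alpha>0] by simp
    then show False using \<alpha>0(1) by (simp add: in_keys_iff)
  qed
  have KPt: "\<forall>\<beta>\<in>ks ?Pt. ks \<beta> \<subseteq> V"
  proof
    fix \<beta> assume hb: "\<beta> \<in> ks ?Pt"
    obtain \<alpha> where a: "\<alpha> \<in> ks P" "lk \<alpha> v = t" "\<beta> = rem v \<alpha>" using slice_keys[OF hb] by blast
    have "ks \<alpha> \<subseteq> insert v V" using K a(1) by blast
    then show "ks \<beta> \<subseteq> V" using keys_rem[of v \<alpha>] a(3) by blast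
  qed
  have tdPt: "tdeg ?Pt + t \<le> tdeg P"
  proof -
    have "tdeg ?Pt \<le> tdeg P - t"
    proof (rule tdeg_le)
      fix \<beta> assume hb: "\<beta> \<in> ks ?Pt"
      obtain \<alpha> where a: "\<alpha> \<in> ks P" "lk \<alpha> v = t" "\<beta> = rem v \<alpha>" using slice_keys[OF hb] by blast
      then show "mdeg \<beta> \<le> tdeg P - t" using mdeg_rem[of v \<alpha>] mdeg_le_tdeg[OF a(1)] by simp
    qed
    moreover have "t \<le> tdeg P" using mdeg_rem[of v \<alpha>0] mdeg_le_tdeg[OF \<alpha>0(1)] \<alpha>0(2) by simp
    ultimately show ?thesis by simp
  qed
  define X where "X = (\<Sum>a'\<in>PiE V (\<lambda>_. S). vord ?Pt a')"
  have IH': "card S * X \<le> tdeg ?Pt * card S ^ card V"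
    unfolding X_def using IH[OF Pt0 KPt] .
  have cardPi: "card (PiE V (\<lambda>_. S)) = card S ^ card V"
    using finV by (simp add: card_PiE)
  have split: "(\<Sum>a\<in>PiE (insert v V) (\<lambda>_. S). vord P a) = (\<Sum>a'\<in>PiE V (\<lambda>_. S). \<Sum>b\<in>S. vord P (a'(v := b)))"
  proof -
    have "(\<Sum>a\<in>PiE (insert v V) (\<lambda>_. S). vord P a) =
        (\<Sum>a\<in>(\<lambda>(y, g). g(v := y)) ` (S \<times> PiE V (\<lambda>_. S)). vord P a)"
      by (simp only: PiE_insert_eq)
    also have "\<dots> = (\<Sum>x\<in>S \<times> PiE V (\<lambda>_. S). vord P ((\<lambda>(y, g). g(v := y)) x))"
      by (rule sum.reindex_cong[OF inj_combinator[OF vV] refl]) simp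
    also have "\<dots> = (\<Sum>b\<in>S. \<Sum>a'\<in>PiE V (\<lambda>_. S). vord P (a'(v := b)))"
      unfolding sum.cartesian_product by (rule sum.cong) auto
    also have "\<dots> = (\<Sum>a'\<in>PiE V (\<lambda>_. S). \<Sum>b\<in>S. vord P (a'(v := b)))"
      by (rule sum.swap)
    finally show ?thesis .
  qed
  have "(\<Sum>a\<in>PiE (insert v V) (\<lambda>_. S). vord P a) \<le> (\<Sum>a'\<in>PiE V (\<lambda>_. S). card S * vord ?Pt a' + t)"
    unfolding split by (rule sum_mono) (rule slice_bound[OF P0 finS t_def])
  also have "\<dots> = card S * X + card S ^ card V * t"
    by (simp add: X_def sum.distrib sum_distrib_left cardPi)
  finally have L: "(\<Sum>a\<in>PiE (insert v V) (\<lambda>_. S). vord P a) \<le> card S * X + card S ^ card V * t" .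
  have "card S * (\<Sum>a\<in>PiE (insert v V) (\<lambda>_. S). vord P a) \<le> card S * (card S * X + card S ^ card V * t)"
    using L by (rule mult_le_mono2)
  also have "\<dots> = card S * (card S * X) + card S ^ Suc (card V) * t"
    by (simp add: algebra_simps)
  also have "\<dots> \<le> card S * (tdeg ?Pt * card S ^ card V) + card S ^ Suc (card V) * t"
    using IH' by simp
  also have "\<dots> = (tdeg ?Pt + t) * card S ^ Suc (card V)"
    by (simp add: algebra_simps)
  also have "\<dots> \<le> tdeg P * card S ^ Suc (card V)"
    using tdPt by simp
  finally show "card S * (\<Sum>a\<in>PiE (insert v V) (\<lambda>_. S). vord P a) \<le> tdeg P * card S ^ card (insert v V)"
    using finV vV by simp
qed



lemma R_hasse_eval:
  fixes Q :: "nat \<Rightarrow> ('k::{finite,linorder}, ('k, 'a::field) ratfun) mpoly"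
    and f :: "('k,'a) mpoly" and a :: "'k \<Rightarrow> 'a"
  assumes Pa: "\<forall>i<s. Pa i = DeltaAt f i a" and e: "mdeg e + m + 1 \<le> s"
  shows "mpeval (hasse e (\<Sum>i\<in>{1..m}. Q i * DeltaPoly f (i - 1))) (\<lambda>j. rconst (a j)) = DeltaQ m Q Pa e a"
proof -
  have "mpeval (hasse e (\<Sum>i\<in>{1..m}. Q i * DeltaPoly f (i - 1))) (\<lambda>j. rconst (a j)) =
     (\<Sum>i\<in>{1..m}. \<Sum>e'\<in>Ebox e. mpeval (hasse e' (Q i)) (\<lambda>j. rconst (a j)) *
        mpeval (hasse (e - e') (DeltaPoly f (i - 1))) (\<lambda>j. rconst (a j)))"
    by (simp add: hasse_sum hasse_mult mpeval_sum mpeval_mult)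
  also have "\<dots> = DeltaQ m Q Pa e a"
    unfolding DeltaQ_def
  proof (intro sum.cong refl)
    fix i e' assume i: "i \<in> {1..m}" and e': "e' \<in> Ebox e"
    have "mdeg (e - e') \<le> mdeg e" by (rule mdeg_minus_le)
    then have "i - 1 + mdeg (e - e') < s" using i e by auto
    then show "mpeval (hasse e' (Q i)) (\<lambda>j. rconst (a j)) * mpeval (hasse (e - e') (DeltaPoly f (i - 1))) (\<lambda>j. rconst (a j)) =
        mpeval (hasse e' (Q i)) (\<lambda>j. rconst (a j)) * rpoly (tau (i - 1) (e - e') Pa)"
      using deltapoly_hasse_eval[OF _ Pa] by simp
  qed
  finally show ?thesis .
qed

lemma keys_map_sub: "ks (Poly_Mapping.map \<phi> p) \<subseteq> ks p"
  by (auto simp: in_keys_iff map.rep_eq when_def)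

lemma keys_hasse_sub: "\<gamma> \<in> ks (hasse e f) \<Longrightarrow> \<exists>\<alpha>\<in>ks f. \<gamma> = \<alpha> - e"
proof -
  assume h: "\<gamma> \<in> ks (hasse e f)"
  have "ks (hasse e f) \<subseteq> (\<Union>\<alpha>\<in>ks f. ks (sg (\<alpha> - e) (of_nat (mbinom \<alpha> e) * lk f \<alpha>)))"
    unfolding hasse_def by (rule keys_sum)
  from subsetD[OF this h] obtain \<alpha> where a: "\<alpha> \<in> ks f" "\<gamma> \<in> ks (sg (\<alpha> - e) (of_nat (mbinom \<alpha> e) * lk f \<alpha>))"
    by blast
  from a(2) have "\<gamma> = \<alpha> - e" using keys_single by (metis empty_iff singletonD)
  then show ?thesis using a(1) by blast
qed

lemma mdeg_deltapoly:
  fixes f :: "('k::{finite,linorder}, 'a::field) mpoly"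
  assumes h: "\<gamma> \<in> ks (DeltaPoly f n)"
  shows "mdeg \<gamma> \<le> tdeg f"
proof -
  have "ks (DeltaPoly f n) \<subseteq> (\<Union>e1\<in>expvecs n. ks (Poly_Mapping.map (\<lambda>c. rpoly (sg e1 c)) (hasse e1 f)))"
    unfolding DeltaPoly_def by (rule keys_sum)
  from subsetD[OF this h] obtain e1 where "\<gamma> \<in> ks (Poly_Mapping.map (\<lambda>c. rpoly (sg e1 c)) (hasse e1 f))"
    by blast
  then have "\<gamma> \<in> ks (hasse e1 f)" by (rule subsetD[OF keys_map_sub])
  then obtain \<alpha> where a: "\<alpha> \<in> ks f" "\<gamma> = \<alpha> - e1" using keys_hasse_sub by blast
  have "mdeg \<gamma> \<le> mdeg \<alpha>" using a(2) mdeg_minus_le by simp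
  also have "\<dots> \<le> tdeg f" using mdeg_le_tdeg[OF a(1)] .
  finally show ?thesis .
qed

lemma R_keys_bound:
  fixes Q :: "nat \<Rightarrow> ('k::{finite,linorder}, ('k, 'a::field) ratfun) mpoly" and f :: "('k,'a) mpoly"
  assumes Qd: "\<forall>i\<in>{1..m}. real (tdeg (Q i)) \<le> D" and fd: "tdeg f \<le> d"
    and h: "\<gamma> \<in> ks (\<Sum>i\<in>{1..m}. Q i * DeltaPoly f (i - 1))"
  shows "real (mdeg \<gamma>) \<le> D + real d"
proof -
  have "ks (\<Sum>i\<in>{1..m}. Q i * DeltaPoly f (i - 1)) \<subseteq> (\<Union>i\<in>{1..m}. ks (Q i * DeltaPoly f (i - 1)))"
    by (rule keys_sum)
  from subsetD[OF this h] obtain i where i: "i \<in> {1..m}" "\<gamma> \<in> ks (Q i * DeltaPoly f (i - 1))" by blast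
  from subsetD[OF keys_mult i(2)] obtain \<beta> \<delta> where bd: "\<gamma> = \<beta> + \<delta>" "\<beta> \<in> ks (Q i)" "\<delta> \<in> ks (DeltaPoly f (i - 1))"
    by blast
  have "mdeg \<beta> \<le> tdeg (Q i)" by (rule mdeg_le_tdeg[OF bd(2)])
  then have b: "real (mdeg \<beta>) \<le> D" using Qd i(1) by (meson le_trans of_nat_le_iff order.trans)
  have "mdeg \<delta> \<le> d" using mdeg_deltapoly[OF bd(3)] fd by simp
  then show ?thesis using b bd(1) by (simp add: mdeg_add)
qed

theorem lemma4p3:
  fixes S :: "'a::field set"
    and s m d T :: nat
    and D :: real
    and P :: "('k::{finite,linorder} \<Rightarrow> 'a) \<Rightarrow> nat \<Rightarrow> ('k, 'a) mpoly"
    and Q :: "nat \<Rightarrow> ('k, ('k, 'a) ratfun) mpoly"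
    and f :: "('k, 'a) mpoly"
  assumes char: "CHAR('a) = 0 \<or> CHAR('a) > d"
    and finS: "finite S"
    and m_le: "m + 1 + CARD('k) \<le> s"
    and D_def: "D = 10 * real (card S) * (real s - real m) / (real m powr (1 / real CARD('k)))"
    and P_hom: "\<forall>a. (\<forall>j. a j \<in> S) \<longrightarrow> (\<forall>i<s. \<forall>e\<in>Poly_Mapping.keys (P a i). mdeg e = i)"
    and Q_nz: "\<exists>i\<in>{1..m}. Q i \<noteq> 0"
    and Q_deg: "\<forall>i\<in>{1..m}. real (tdeg (Q i)) \<le> D"
    and Q_van: "\<forall>a. (\<forall>j. a j \<in> S) \<longrightarrow> (\<forall>e. mdeg e + m + 1 \<le> s \<longrightarrow> DeltaQ m Q (P a) e a = 0)"
    and f_deg: "tdeg f \<le> d"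
    and agree: "card {a. (\<forall>j. a j \<in> S) \<and> (\<forall>i<s. P a i = DeltaAt f i a)} \<ge> T"
    and T_gt: "real T > (D + real d) * real (card S) ^ (CARD('k) - 1) / (real s - real m)"
  shows "(\<Sum>i\<in>{1..m}. Q i * DeltaPoly f (i - 1)) = 0"
proof (rule ccontr)
  define R where "R = (\<Sum>i\<in>{1..m}. Q i * DeltaPoly f (i - 1))"
  assume "(\<Sum>i\<in>{1..m}. Q i * DeltaPoly f (i - 1)) \<noteq> 0"
  then have R0: "R \<noteq> 0" by (simp add: R_def)
  define A where "A = {a. (\<forall>j. a j \<in> S) \<and> (\<forall>i<s. P a i = DeltaAt f i a)}"
  define \<iota> where "\<iota> = (\<lambda>(a::'k \<Rightarrow> 'a) j. (rconst (a j) :: ('k, 'a) ratfun))"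
  define S' where "S' = (rconst ` S :: ('k, 'a) ratfun set)"
  have TA: "T \<le> card A" using agree by (simp add: A_def)
  have finA: "finite A"
  proof -
    have "A \<subseteq> PiE UNIV (\<lambda>_. S)" by (auto simp: A_def PiE_UNIV_domain)
    then show ?thesis by (rule finite_subset) (intro finite_PiE; simp add: finS)
  qed
  have sm: "m < s" using m_le by simp
  have vo: "s - m \<le> vord R (\<iota> a)" if a: "a \<in> A" for a
  proof (rule vord_ge[OF R0])
    fix e :: "'k \<Rightarrow>\<^sub>0 nat" assume "mdeg e < s - m"
    then have e: "mdeg e + m + 1 \<le> s" by simp
    have Pa: "\<forall>i<s. P a i = DeltaAt f i a" and aS: "\<forall>j. a j \<in> S" using a by (auto simp: A_def)
    have "mpeval (hasse e R) (\<iota> a) = DeltaQ m Q (P a) e a"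
      unfolding R_def \<iota>_def by (rule R_hasse_eval[OF Pa e])
    also have "\<dots> = 0" using Q_van aS e by blast
    finally show "mpeval (hasse e R) (\<iota> a) = 0" .
  qed
  have inj\<iota>: "inj_on \<iota> A"
  proof (rule inj_onI)
    fix a b assume "\<iota> a = \<iota> b"
    then have "rconst (a j) = (rconst (b j) :: ('k, 'a) ratfun)" for j
      unfolding \<iota>_def by meson
    then show "a = b" using rconst_inj by (auto intro: ext)
  qed
  have injc: "inj_on (rconst :: 'a \<Rightarrow> ('k, 'a) ratfun) S" by (auto intro: inj_onI rconst_inj)
  have cardS': "card S' = card S" unfolding S'_def by (rule card_image[OF injc])
  have finS': "finite S'" unfolding S'_def using finS by simp
  have sub: "\<iota> ` A \<subseteq> PiE UNIV (\<lambda>_. S')"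
    by (auto simp: A_def \<iota>_def S'_def PiE_UNIV_domain)
  have finPi: "finite (PiE (UNIV::'k set) (\<lambda>_. S'))" by (intro finite_PiE; simp add: finS')
  have "(s - m) * T \<le> (s - m) * card A" using TA by simp
  also have "\<dots> = (\<Sum>a\<in>A. s - m)" by simp
  also have "\<dots> \<le> (\<Sum>a\<in>A. vord R (\<iota> a))" by (rule sum_mono) (rule vo)
  also have "\<dots> = (\<Sum>b\<in>\<iota> ` A. vord R b)" by (rule sum.reindex[OF inj\<iota>, symmetric, simplified comp_def])
  also have "\<dots> \<le> (\<Sum>b\<in>PiE UNIV (\<lambda>_. S'). vord R b)" by (rule sum_mono2[OF finPi sub]) simp
  finally have L1: "(s - m) * T \<le> (\<Sum>b\<in>PiE UNIV (\<lambda>_. S'). vord R b)" .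
  have L2: "card S' * (\<Sum>b\<in>PiE UNIV (\<lambda>_. S'). vord R b) \<le> tdeg R * card S' ^ card (UNIV :: 'k set)"
    by (rule dkss[OF finS']) (auto simp: R0)
  have L3: "card S * ((s - m) * T) \<le> tdeg R * card S ^ CARD('k)"
  proof -
    have "card S * ((s - m) * T) \<le> card S * (\<Sum>b\<in>PiE UNIV (\<lambda>_. S'). vord R b)"
      by (rule mult_le_mono2[OF L1])
    also have "\<dots> \<le> tdeg R * card S ^ CARD('k)" using L2 cardS' by simp
    finally show ?thesis .
  qed
  have Dnn: "D \<ge> 0" using D_def sm by auto
  obtain \<gamma> where \<gamma>: "\<gamma> \<in> ks R" "mdeg \<gamma> = tdeg R" using tdeg_in[OF R0] by blast
  have tdR: "real (tdeg R) \<le> D + real d"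
    using R_keys_bound[OF Q_deg f_deg, of \<gamma>] \<gamma> by (simp add: R_def)
  show False
  proof (cases "card S = 0")
    case True
    then have "S = {}" using finS by simp
    then have "A = {}" by (auto simp: A_def)
    then have "T = 0" using TA by simp
    moreover have "(D + real d) * real (card S) ^ (CARD('k) - 1) / (real s - real m) \<ge> 0"
      using Dnn sm by auto
    ultimately show False using T_gt by simp
  next
    case False
    let ?N = "card S"
    obtain k' where k': "CARD('k) = Suc k'" using not0_implies_Suc[of "CARD('k)"] by auto
    have "card S * ((s - m) * T) \<le> card S * (tdeg R * card S ^ (CARD('k) - 1))"
      using L3 unfolding k' by (simp add: mult_ac)
    then have "(s - m) * T \<le> tdeg R * card S ^ (CARD('k) - 1)"
      using False by simp
    then have "real (s - m) * real T \<le> real (tdeg R) * real (card S) ^ (CARD('k) - 1)"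
      by (metis of_nat_le_iff of_nat_mult of_nat_power)
    also have "\<dots> \<le> (D + real d) * real (card S) ^ (CARD('k) - 1)"
      using tdR by (intro mult_right_mono) auto
    finally have "real T * (real s - real m) \<le> (D + real d) * real (card S) ^ (CARD('k) - 1)"
      using sm by (simp add: of_nat_diff mult_ac)
    then have "real T \<le> (D + real d) * real (card S) ^ (CARD('k) - 1) / (real s - real m)"
      using sm by (simp add: pos_le_divide_eq)
    then show False using T_gt by simp
  qed
qed


end
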